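(* Let $f(x)=B_0+B^\top x$ with $B_0\in\mathbb R^m$, $B\in\mathbb R^{n\times m}$, and let $X\sim\mathcal N(\mu,\Sigma)$ with $\Sigma\in\mathbb R^{n\times n}$ symmetric positive definite. For $S\subseteq[n]$ let $A_S=\Sigma_{:,S}\Sigma_{S,S}^{-1}\in\mathbb R^{n\times|S|}$ and let $\widehat A_S\in\mathbb R^{n\times n}$ be obtained by placing the columns of $A_S$ in the positions indexed by $S$ and zeros in the columns outside $S$ (so $\widehat A_\varnothing=0$). For $i\in[n]$ set $$M_i(\Sigma)=\sum_{S\subseteq[n]\setminus\{i\}}\frac{|S|!(n-|S|-1)!}{n!}\big(\widehat A_{S\cup\{i\}}-\widehat A_S\big)\in\mathbb R^{n\times n}.$$ Then for every $x\in\mathbb R^n$ and $i\in[n]$, $\phi_i(f;x)=B^\top M_i(\Sigma)(x-\mu)\in\mathbb R^m$.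
   Context: For $S\subseteq[n]=\{1,\dots,n\}$, $X_S,x_S,\mu_S$ denote subvectors indexed by $S$; $\Sigma_{S,S}$ is the principal submatrix of $\Sigma$ indexed by $S$ and $\Sigma_{:,S}$ the $n\times|S|$ submatrix of columns indexed by $S$. Define $v_f(S)=\mathbb E[f(X)\mid X_S=x_S]-\mathbb E[f(X)]\in\mathbb R^m$ (with $\mathbb E[f(X)\mid X_\varnothing]=\mathbb E[f(X)]$), and the SHAP value $\phi_i(f;x)=\sum_{S\subseteq[n]\setminus\{i\}}\frac{|S|!(n-|S|-1)!}{n!}(v_f(S\cup\{i\})-v_f(S))$. *)

theory Defs
  imports "HOL-Analysis.Analysis"
begin

definition sym_posdef :: "real^'n^'n \<Rightarrow> bool" where
  "sym_posdef \<Sigma> \<longleftrightarrow> transpose \<Sigma> = \<Sigma> \<and> (\<forall>x. x \<noteq> 0 \<longrightarrow> x \<bullet> (\<Sigma> *v x) > 0)"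

definition gauss_density :: "real^'n^'n \<Rightarrow> real^'n \<Rightarrow> real^'n \<Rightarrow> real" where
  "gauss_density \<Sigma> \<mu> z =
     exp (- (1/2) * ((z - \<mu>) \<bullet> (matrix_inv \<Sigma> *v (z - \<mu>))))
     / sqrt ((2 * pi) ^ CARD('n) * det \<Sigma>)"

definition glue :: "'n set \<Rightarrow> real^'n \<Rightarrow> ('n::finite \<Rightarrow> real) \<Rightarrow> real^'n" where
  "glue S x y = (\<chi> j. if j \<in> S then x $ j else y j)"

definition gauss_expect :: "real^'n^'n \<Rightarrow> real^'n \<Rightarrow> (real^'n \<Rightarrow> 'b::euclidean_space) \<Rightarrow> 'b" where
  "gauss_expect \<Sigma> \<mu> g = (\<integral>z. gauss_density \<Sigma> \<mu> z *\<^sub>R g z \<partial>lborel)"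

text \<open>Conditional expectation E[g(X) | X_S = x_S] for X ~ N(mu, Sigma), defined via the
  (everywhere positive, continuous) conditional density of X_{[n]-S} given X_S = x_S;
  for S empty it is E[g(X)].\<close>
definition gauss_cond_expect ::
  "real^'n^'n \<Rightarrow> real^'n \<Rightarrow> (real^'n \<Rightarrow> 'b::euclidean_space) \<Rightarrow> 'n::finite set \<Rightarrow> real^'n \<Rightarrow> 'b" where
  "gauss_cond_expect \<Sigma> \<mu> g S x =
     (if S = {} then gauss_expect \<Sigma> \<mu> g
      else (\<integral>y. gauss_density \<Sigma> \<mu> (glue S x y) *\<^sub>R g (glue S x y) \<partial>(PiM (- S) (\<lambda>_. lborel)))
           /\<^sub>R (\<integral>y. gauss_density \<Sigma> \<mu> (glue S x y) \<partial>(PiM (- S) (\<lambda>_. lborel))))"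

definition shap_v ::
  "real^'n^'n \<Rightarrow> real^'n \<Rightarrow> (real^'n \<Rightarrow> 'b::euclidean_space) \<Rightarrow> real^'n \<Rightarrow> 'n::finite set \<Rightarrow> 'b" where
  "shap_v \<Sigma> \<mu> g x S = gauss_cond_expect \<Sigma> \<mu> g S x - gauss_expect \<Sigma> \<mu> g"

definition shap ::
  "real^'n^'n \<Rightarrow> real^'n \<Rightarrow> (real^'n \<Rightarrow> 'b::euclidean_space) \<Rightarrow> real^'n \<Rightarrow> 'n::finite \<Rightarrow> 'b" where
  "shap \<Sigma> \<mu> g x i =
     (\<Sum>S\<in>{S. S \<subseteq> UNIV - {i}}.
        (fact (card S) * fact (CARD('n) - card S - 1) / fact CARD('n)) *\<^sub>R
        (shap_v \<Sigma> \<mu> g x (S \<union> {i}) - shap_v \<Sigma> \<mu> g x S))"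

text \<open>Inverse of the principal submatrix Sigma_{S,S}, as a function on S x S
  (extended by zero outside S x S).\<close>
definition sub_inv :: "real^'n^'n \<Rightarrow> 'n::finite set \<Rightarrow> 'n \<Rightarrow> 'n \<Rightarrow> real" where
  "sub_inv \<Sigma> S = (THE C.
      (\<forall>j\<in>S. \<forall>l\<in>S. (\<Sum>k\<in>S. \<Sigma> $ j $ k * C k l) = (if j = l then 1 else 0)) \<and>
      (\<forall>j\<in>S. \<forall>l\<in>S. (\<Sum>k\<in>S. C j k * \<Sigma> $ k $ l) = (if j = l then 1 else 0)) \<and>
      (\<forall>j l. j \<notin> S \<or> l \<notin> S \<longrightarrow> C j l = 0))"

definition A_hat :: "real^'n^'n \<Rightarrow> 'n::finite set \<Rightarrow> real^'n^'n" where
  "A_hat \<Sigma> S = (\<chi> r c. if c \<in> S then (\<Sum>k\<in>S. \<Sigma> $ r $ k * sub_inv \<Sigma> S k c) else 0)"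

definition M_mat :: "real^'n^'n \<Rightarrow> 'n::finite \<Rightarrow> real^'n^'n" where
  "M_mat \<Sigma> i =
     (\<Sum>S\<in>{S. S \<subseteq> UNIV - {i}}.
        (fact (card S) * fact (CARD('n) - card S - 1) / fact CARD('n)) *\<^sub>R
        (A_hat \<Sigma> (S \<union> {i}) - A_hat \<Sigma> S))"

end

theory Submission
  imports Defs "HOL-Probability.Distributions"
begin

lemma gauss1d:
  fixes a b c :: real assumes a: "a > 0"
  shows "(\<integral>\<^sup>+t. ennreal (exp (-(1/2) * a * (t - c)^2 + b * (t - c))) \<partial>lborel)
         = ennreal (sqrt (2*pi/a) * exp (b^2 / (2*a)))"
proof -
  define \<sigma> where "\<sigma> = 1 / sqrt a"
  have s2: "\<sigma>^2 = 1/a" using a by (simp add: \<sigma>_def power_divide)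
  have sp: "\<sigma> > 0" using a by (simp add: \<sigma>_def)
  have eq: "exp (-(1/2) * a * (t - c)^2 + b * (t - c)) =
     (sqrt (2*pi/a) * exp (b^2 / (2*a))) * normal_density (c + b/a) \<sigma> t" for t
  proof -
    have "normal_density (c + b/a) \<sigma> t = 1 / sqrt (2*pi/a) * exp (-((t - (c+b/a))^2) * a / 2)"
      unfolding normal_density_def s2 using a by (simp add: field_simps)
    moreover have "-(1/2) * a * (t - c)^2 + b * (t - c) = b^2/(2*a) + (-((t - (c+b/a))^2) * a / 2)"
      using a by (simp add: field_simps power2_eq_square)
    moreover have "sqrt (2*pi/a) > 0" using a by simp
    moreover have "exp (b^2/(2*a) + (-((t - (c+b/a))^2) * a / 2)) = exp (b^2/(2*a)) * exp (-((t - (c+b/a))^2) * a / 2)"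
      by (rule exp_add)
    ultimately show ?thesis using a by simp
  qed
  have "(\<integral>\<^sup>+t. ennreal (exp (-(1/2) * a * (t - c)^2 + b * (t - c))) \<partial>lborel)
      = (\<integral>\<^sup>+t. ennreal (sqrt (2*pi/a) * exp (b^2 / (2*a))) * ennreal (normal_density (c + b/a) \<sigma> t) \<partial>lborel)"
    by (intro nn_integral_cong, subst eq, subst ennreal_mult) (use a in auto)
  also have "\<dots> = ennreal (sqrt (2*pi/a) * exp (b^2 / (2*a))) * (\<integral>\<^sup>+t. ennreal (normal_density (c + b/a) \<sigma> t) \<partial>lborel)"
    by (rule nn_integral_cmult) simp
  also have "(\<integral>\<^sup>+t. ennreal (normal_density (c + b/a) \<sigma> t) \<partial>lborel) = 1"
    using sp by (subst nn_integral_eq_integral) auto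
  finally show ?thesis by simp
qed

lemma lborel_reflect_emeasure:
  fixes c :: real assumes "A \<in> sets borel"
  shows "emeasure lborel ((\<lambda>t. c - t) -` A) = emeasure lborel A"
proof -
  have "lborel = density (distr lborel borel (\<lambda>x. c + (-1) * x)) (\<lambda>_. ennreal \<bar>-1\<bar>)"
    by (rule lborel_real_affine) simp
  then have "lborel = distr lborel borel (\<lambda>x. c - x)"
    by (simp add: density_1)
  then have "emeasure lborel A = emeasure (distr lborel borel (\<lambda>x. c - x)) A" by simp
  also have "\<dots> = emeasure lborel ((\<lambda>t. c - t) -` A)"
    using assms by (subst emeasure_distr) auto
  finally show ?thesis by simp
qed

lemma PiM_reflect:
  fixes T :: "'a set" and m :: "'a \<Rightarrow> real"
  assumes T: "finite T"
  shows "distr (PiM T (\<lambda>_. lborel)) (PiM T (\<lambda>_. lborel)) (\<lambda>y. \<lambda>j\<in>T. 2 * m j - y j) = PiM T (\<lambda>_. lborel)"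
proof -
  interpret product_sigma_finite "\<lambda>_. lborel :: real measure"
    by (simp add: product_sigma_finite_def sigma_finite_lborel)
  have meas: "(\<lambda>y. \<lambda>j\<in>T. 2 * m j - y j) \<in> measurable (PiM T (\<lambda>_. lborel)) (PiM T (\<lambda>_. lborel))"
    by measurable
  show ?thesis
  proof (rule PiM_eqI[OF T])
    show "sets (distr (PiM T (\<lambda>_. lborel)) (PiM T (\<lambda>_. lborel)) (\<lambda>y. \<lambda>j\<in>T. 2 * m j - y j)) = sets (PiM T (\<lambda>_. lborel))"
      by simp
    fix A assume A: "\<And>i. i \<in> T \<Longrightarrow> A i \<in> sets (lborel :: real measure)"
    have pre: "(\<lambda>y. \<lambda>j\<in>T. 2 * m j - y j) -` Pi\<^sub>E T A \<inter> space (PiM T (\<lambda>_. lborel))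
        = Pi\<^sub>E T (\<lambda>i. (\<lambda>t. 2 * m i - t) -` A i)"
      by (auto simp: space_PiM PiE_def Pi_def extensional_def)
    have "emeasure (distr (PiM T (\<lambda>_. lborel)) (PiM T (\<lambda>_. lborel)) (\<lambda>y. \<lambda>j\<in>T. 2 * m j - y j)) (Pi\<^sub>E T A)
       = emeasure (PiM T (\<lambda>_. lborel)) (Pi\<^sub>E T (\<lambda>i. (\<lambda>t. 2 * m i - t) -` A i))"
      using A meas by (subst emeasure_distr) (auto simp: pre intro!: sets_PiM_I_finite T)
    also have "\<dots> = (\<Prod>i\<in>T. emeasure lborel ((\<lambda>t. 2 * m i - t) -` A i))"
      using A T by (subst emeasure_PiM) (auto intro!: measurable_sets_borel[OF _ A])
    also have "\<dots> = (\<Prod>i\<in>T. emeasure lborel (A i))"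
      using A by (intro prod.cong refl lborel_reflect_emeasure) auto
    finally show "emeasure (distr (PiM T (\<lambda>_. lborel)) (PiM T (\<lambda>_. lborel)) (\<lambda>y. \<lambda>j\<in>T. 2 * m j - y j)) (Pi\<^sub>E T A)
        = (\<Prod>i\<in>T. emeasure lborel (A i))" .
  qed
qed

lemma lborel_vec:
  "(lborel :: (real^'n::finite) measure) = distr (PiM UNIV (\<lambda>_. lborel)) borel (\<lambda>f. vec_lambda f)"
proof (rule lborel_eqI)
  interpret product_sigma_finite "\<lambda>_. lborel :: real measure"
    by (simp add: product_sigma_finite_def sigma_finite_lborel)
  have meas: "(\<lambda>f. vec_lambda f :: real^'n) \<in> measurable (PiM UNIV (\<lambda>_. lborel)) borel"
  proof (subst borel_measurable_euclidean_space, intro ballI)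
    fix b :: "real^'n" assume "b \<in> Basis"
    then obtain i where b: "b = axis i 1" by (auto simp: Basis_vec_def)
    show "(\<lambda>f. vec_lambda f \<bullet> b) \<in> borel_measurable (PiM UNIV (\<lambda>_. lborel))"
      unfolding b cart_eq_inner_axis[symmetric] by simp
  qed
  fix l u :: "real^'n" assume le: "\<And>b. b \<in> Basis \<Longrightarrow> l \<bullet> b \<le> u \<bullet> b"
  have pre: "(\<lambda>f. vec_lambda f :: real^'n) -` box l u \<inter> space (PiM UNIV (\<lambda>_. lborel)) = Pi\<^sub>E UNIV (\<lambda>i. {l$i <..< u$i})"
    by (auto simp: space_PiM box_def Basis_vec_def cart_eq_inner_axis[symmetric])
  have "emeasure (distr (PiM UNIV (\<lambda>_. lborel)) borel (\<lambda>f. vec_lambda f)) (box l u)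
     = emeasure (PiM UNIV (\<lambda>_. lborel)) (Pi\<^sub>E UNIV (\<lambda>i. {l$i <..< u$i}))"
    using meas by (subst emeasure_distr) (auto simp: pre)
  also have "\<dots> = (\<Prod>i\<in>UNIV. emeasure lborel {l$i <..< u$i})"
    by (subst emeasure_PiM) auto
  also have "\<dots> = (\<Prod>i\<in>UNIV. ennreal (u$i - l$i))"
  proof (intro prod.cong refl)
    fix i :: 'n
    have "l$i \<le> u$i" using le[of "axis i 1"] by (auto simp: Basis_vec_def cart_eq_inner_axis)
    then show "emeasure lborel {l$i <..< u$i} = ennreal (u$i - l$i)" by simp
  qed
  also have "\<dots> = ennreal (\<Prod>i\<in>UNIV. u$i - l$i)"
    by (rule prod_ennreal) (use le in \<open>auto simp: Basis_vec_def cart_eq_inner_axis\<close>)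
  also have "(\<Prod>i\<in>UNIV. u$i - l$i) = (\<Prod>b\<in>Basis. (u - l) \<bullet> b)"
    by (simp add: Basis_vec_def cart_eq_inner_axis axis_eq_axis prod.UNION_disjoint inner_diff_left)
  finally show "emeasure (distr (PiM UNIV (\<lambda>_. lborel)) borel (\<lambda>f. vec_lambda f)) (box l u) = (\<Prod>b\<in>Basis. (u - l) \<bullet> b)" .
qed simp

definition emb :: "'n::finite set \<Rightarrow> ('n \<Rightarrow> 'n \<Rightarrow> real) \<Rightarrow> real^'n^'n" where
  "emb T P = (\<chi> j l. if j \<in> T \<and> l \<in> T then P j l else if j = l then 1 else 0)"

lemma det_col:
  fixes A :: "real^'n::finite^'n"
  assumes col: "\<And>i. i \<noteq> k \<Longrightarrow> A$i$k = 0"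
  shows "det A = A$k$k * det (\<chi> i l. if i = k \<or> l = k then (if i = l then 1 else 0) else A$i$l)"
proof -
  define A' :: "real^'n^'n" where "A' = (\<chi> i l. if i = k \<or> l = k then (if i = l then 1 else 0) else A$i$l)"
  let ?P = "{p. p permutes (UNIV::'n set)}"
  let ?Q = "{p. p permutes (UNIV::'n set) \<and> p k = k}"
  have fin: "finite ?P" by (simp add: finite_permutations)
  have z1: "(\<Prod>i\<in>UNIV. A$i$p i) = 0" if "p \<in> ?P - ?Q" for p
  proof -
    from that have pp: "p permutes UNIV" and pk: "p k \<noteq> k" by auto
    obtain i where i: "p i = k" using pp by (meson permutes_univ)
    have "i \<noteq> k" using i pk by auto
    then have "A$i$p i = 0" using col i by simp
    then show ?thesis by (intro prod_zero) auto
  qed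
  have z2: "(\<Prod>i\<in>UNIV. A'$i$p i) = 0" if "p \<in> ?P - ?Q" for p
  proof -
    from that have pk: "p k \<noteq> k" by auto
    have "A'$k$p k = 0" using pk by (simp add: A'_def)
    then show ?thesis by (intro prod_zero) auto
  qed
  have e: "(\<Prod>i\<in>UNIV. A$i$p i) = A$k$k * (\<Prod>i\<in>UNIV. A'$i$p i)" if "p \<in> ?Q" for p
  proof -
    from that have pp: "p permutes UNIV" and pk: "p k = k" by auto
    have ne: "p i \<noteq> k" if "i \<noteq> k" for i
      using that pk pp by (metis permutes_inj injD)
    have "(\<Prod>i\<in>UNIV. A$i$p i) = A$k$p k * (\<Prod>i\<in>UNIV-{k}. A$i$p i)"
      by (subst prod.remove[of _ k]) auto
    moreover have "(\<Prod>i\<in>UNIV. A'$i$p i) = A'$k$p k * (\<Prod>i\<in>UNIV-{k}. A'$i$p i)"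
      by (subst prod.remove[of _ k]) auto
    moreover have "(\<Prod>i\<in>UNIV-{k}. A'$i$p i) = (\<Prod>i\<in>UNIV-{k}. A$i$p i)"
      using ne by (intro prod.cong) (auto simp: A'_def)
    ultimately show ?thesis using pk by (simp add: A'_def)
  qed
  have "det A = (\<Sum>p\<in>?Q. of_int (sign p) * (\<Prod>i\<in>UNIV. A$i$p i))"
    unfolding det_def using fin z1 by (intro sum.mono_neutral_right) auto
  also have "\<dots> = (\<Sum>p\<in>?Q. A$k$k * (of_int (sign p) * (\<Prod>i\<in>UNIV. A'$i$p i)))"
    using e by (intro sum.cong) auto
  also have "\<dots> = A$k$k * (\<Sum>p\<in>?Q. of_int (sign p) * (\<Prod>i\<in>UNIV. A'$i$p i))"
    by (simp add: sum_distrib_left)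
  also have "(\<Sum>p\<in>?Q. of_int (sign p) * (\<Prod>i\<in>UNIV. A'$i$p i)) = det A'"
    unfolding det_def using fin z2 by (intro sum.mono_neutral_right[symmetric]) auto
  finally show ?thesis by (simp add: A'_def)
qed

lemma det_L:
  fixes d :: "'n::finite \<Rightarrow> real"
  shows "det (\<chi> i j. if i = j then 1 else if j = k then d i else 0 :: real^'n^'n) = 1"
proof -
  let ?L = "(\<chi> i j. if i = j then 1 else if j = k then d i else 0 :: real^'n^'n)"
  have "det ?L = det (transpose ?L)" by (simp add: det_transpose)
  also have "\<dots> = (transpose ?L)$k$k * det (\<chi> i l. if i = k \<or> l = k then (if i = l then 1 else 0) else (transpose ?L)$i$l)"
    by (rule det_col) (auto simp: transpose_def)
  also have "(\<chi> i l. if i = k \<or> l = k then (if i = l then 1 else 0) else (transpose ?L)$i$l) = (mat 1 :: real^'n^'n)"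
    by (auto simp: transpose_def mat_def vec_eq_iff)
  finally show ?thesis by (simp add: transpose_def)
qed

lemma det_schur:
  fixes P :: "'n::finite \<Rightarrow> 'n \<Rightarrow> real"
  assumes k: "k \<in> T" and nz: "P k k \<noteq> 0"
  shows "det (emb T P) = P k k * det (emb (T - {k}) (\<lambda>j l. P j l - P j k * P k l / P k k))"
proof -
  define E where "E = emb T P"
  define d where "d i = - (E$i$k / E$k$k)" for i
  define L :: "real^'n^'n" where "L = (\<chi> i j. if i = j then 1 else if j = k then d i else 0)"
  have Eij: "E$i$l = (if i \<in> T \<and> l \<in> T then P i l else if i = l then 1 else 0)" for i l
    by (simp add: E_def emb_def)
  have Ekk: "E$k$k = P k k" using k by (simp add: E_def emb_def)
  have R: "(L ** E)$i$l = E$i$l + (if i \<noteq> k then d i * E$k$l else 0)" for i l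
  proof -
    have "(L ** E)$i$l = (\<Sum>j\<in>UNIV. (if j = i then E$j$l else 0) + (if i \<noteq> k \<and> j = k then d i * E$j$l else 0))"
      by (auto simp: matrix_matrix_mult_def L_def intro!: sum.cong)
    also have "\<dots> = E$i$l + (if i \<noteq> k then d i * E$k$l else 0)"
      by (simp add: sum.distrib)
    finally show ?thesis .
  qed
  have RKK: "(L ** E)$k$k = P k k" using R Ekk by simp
  have "det E = det (L ** E)" by (simp add: det_mul L_def det_L)
  also have "\<dots> = (L ** E)$k$k * det (\<chi> i l. if i = k \<or> l = k then (if i = l then 1 else 0) else (L ** E)$i$l)"
    by (rule det_col) (use nz Ekk in \<open>simp add: R d_def\<close>)
  also have "(\<chi> i l. if i = k \<or> l = k then (if i = l then 1 else 0) else (L ** E)$i$l)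
      = emb (T - {k}) (\<lambda>j l. P j l - P j k * P k l / P k k)"
    using k by (auto simp: vec_eq_iff R d_def Eij emb_def)
  finally show ?thesis using RKK by (simp add: E_def)
qed

definition quadT :: "'a set \<Rightarrow> ('a \<Rightarrow> 'a \<Rightarrow> real) \<Rightarrow> ('a \<Rightarrow> real) \<Rightarrow> ('a \<Rightarrow> real) \<Rightarrow> real" where
  "quadT T P c y = (\<Sum>j\<in>T. \<Sum>l\<in>T. (y j - c j) * P j l * (y l - c l))"
definition linT :: "'a set \<Rightarrow> ('a \<Rightarrow> real) \<Rightarrow> ('a \<Rightarrow> real) \<Rightarrow> ('a \<Rightarrow> real) \<Rightarrow> real" where
  "linT T h c y = (\<Sum>j\<in>T. h j * (y j - c j))"
definition gfun :: "'a set \<Rightarrow> ('a \<Rightarrow> 'a \<Rightarrow> real) \<Rightarrow> ('a \<Rightarrow> real) \<Rightarrow> ('a \<Rightarrow> real) \<Rightarrow> ('a \<Rightarrow> real) \<Rightarrow> real" where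
  "gfun T P c h y = exp (-(1/2) * quadT T P c y + linT T h c y)"
definition symT :: "'a set \<Rightarrow> ('a \<Rightarrow> 'a \<Rightarrow> real) \<Rightarrow> bool" where
  "symT T P = (\<forall>j\<in>T. \<forall>l\<in>T. P j l = P l j)"
definition pdT :: "'a set \<Rightarrow> ('a \<Rightarrow> 'a \<Rightarrow> real) \<Rightarrow> bool" where
  "pdT T P = (\<forall>w. (\<exists>j\<in>T. w j \<noteq> 0) \<longrightarrow> 0 < (\<Sum>j\<in>T. \<Sum>l\<in>T. w j * P j l * w l))"

lemma gfun_measurable[measurable]: "gfun T P c h \<in> borel_measurable (PiM T (\<lambda>_. lborel))"
  unfolding gfun_def[abs_def] quadT_def linT_def by measurable

lemma qexp:
  fixes f :: "'a \<Rightarrow> real" and P :: "'a \<Rightarrow> 'a \<Rightarrow> real"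
  assumes fin: "finite T" and k: "k \<notin> T" and sym: "\<And>j. j \<in> T \<Longrightarrow> P j k = P k j"
  shows "(\<Sum>j\<in>insert k T. \<Sum>l\<in>insert k T. f j * P j l * f l)
     = f k * P k k * f k + 2 * f k * (\<Sum>l\<in>T. P k l * f l) + (\<Sum>j\<in>T. \<Sum>l\<in>T. f j * P j l * f l)"
proof -
  have "(\<Sum>j\<in>insert k T. \<Sum>l\<in>insert k T. f j * P j l * f l)
     = f k * P k k * f k + (\<Sum>j\<in>T. f j * P j k * f k) + ((\<Sum>l\<in>T. f k * P k l * f l) + (\<Sum>j\<in>T. \<Sum>l\<in>T. f j * P j l * f l))"
    using fin k by (simp add: sum.distrib)
  also have "(\<Sum>j\<in>T. f j * P j k * f k) = (\<Sum>l\<in>T. f k * P k l * f l)"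
  proof (intro sum.cong refl)
    fix j assume "j \<in> T"
    then have "P j k = P k j" by (rule sym)
    then show "f j * P j k * f k = f k * P k j * f j" by (simp add: mult.commute mult.left_commute)
  qed
  also have "(\<Sum>l\<in>T. f k * P k l * f l) = f k * (\<Sum>l\<in>T. P k l * f l)"
    by (simp add: sum_distrib_left mult.assoc)
  finally show ?thesis by simp
qed

lemma emb_empty: "emb {} P = mat 1"
  by (simp add: emb_def mat_def vec_eq_iff)

lemma pdT_diag:
  fixes P :: "'a \<Rightarrow> 'a \<Rightarrow> real"
  assumes pd: "pdT T P" and k: "k \<in> T" and fin: "finite T"
  shows "0 < P k k"
proof -
  define w :: "'a \<Rightarrow> real" where "w = (\<lambda>j. if j = k then 1 else 0)"
  have "(\<Sum>j\<in>T. \<Sum>l\<in>T. w j * P j l * w l) = P k k"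
  proof -
    have "(\<Sum>j\<in>T. \<Sum>l\<in>T. w j * P j l * w l) = (\<Sum>j\<in>T. if j = k then P k k else 0)"
    proof (intro sum.cong refl)
      fix j assume "j \<in> T"
      show "(\<Sum>l\<in>T. w j * P j l * w l) = (if j = k then P k k else 0)"
        using k fin by (cases "j = k") (simp_all add: w_def sum.If_cases if_distrib[of "\<lambda>x. _ * x"] cong: if_cong)
    qed
    also have "\<dots> = P k k" using k fin by simp
    finally show ?thesis .
  qed
  moreover have "0 < (\<Sum>j\<in>T. \<Sum>l\<in>T. w j * P j l * w l)"
    using pd k unfolding pdT_def by (auto simp: w_def intro!: bexI[of _ k])
  ultimately show ?thesis by simp
qed

lemma quad_schur:
  fixes P :: "'a \<Rightarrow> 'a \<Rightarrow> real" and u :: "'a \<Rightarrow> real"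
  assumes sym: "\<And>j. j \<in> T \<Longrightarrow> P j k = P k j"
  shows "(\<Sum>j\<in>T. \<Sum>l\<in>T. u j * (P j l - P j k * P k l / a) * u l)
       = (\<Sum>j\<in>T. \<Sum>l\<in>T. u j * P j l * u l) - (\<Sum>l\<in>T. P k l * u l)^2 / a"
proof -
  have "(\<Sum>j\<in>T. \<Sum>l\<in>T. u j * (P j l - P j k * P k l / a) * u l)
      = (\<Sum>j\<in>T. \<Sum>l\<in>T. u j * P j l * u l - (u j * P j k) * (P k l * u l) / a)"
    by (intro sum.cong refl) (simp add: algebra_simps)
  also have "\<dots> = (\<Sum>j\<in>T. \<Sum>l\<in>T. u j * P j l * u l) - (\<Sum>j\<in>T. u j * P j k) * (\<Sum>l\<in>T. P k l * u l) / a"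
    by (simp add: sum_subtractf sum_divide_distrib[symmetric] sum_product)
  also have "(\<Sum>j\<in>T. u j * P j k) = (\<Sum>l\<in>T. P k l * u l)"
    using sym by (intro sum.cong refl) (simp add: mult.commute)
  finally show ?thesis by (simp add: power2_eq_square)
qed

lemma lin_schur:
  fixes P :: "'a \<Rightarrow> 'a \<Rightarrow> real" and u :: "'a \<Rightarrow> real"
  shows "(\<Sum>j\<in>T. (h j - hk * P k j / a) * u j) = (\<Sum>j\<in>T. h j * u j) - hk * (\<Sum>j\<in>T. P k j * u j) / a"
  by (simp add: algebra_simps sum_subtractf sum_distrib_left sum_divide_distrib)

lemma schur_pd:
  fixes P :: "'a \<Rightarrow> 'a \<Rightarrow> real"
  assumes fin: "finite T" and k: "k \<notin> T" and sym: "symT (insert k T) P" and pd: "pdT (insert k T) P"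
  shows "pdT T (\<lambda>j l. P j l - P j k * P k l / P k k)"
  unfolding pdT_def
proof (intro allI impI)
  fix w :: "'a \<Rightarrow> real" assume w: "\<exists>j\<in>T. w j \<noteq> 0"
  have symk: "\<And>j. j \<in> T \<Longrightarrow> P j k = P k j" using sym unfolding symT_def by blast
  define a where "a = P k k"
  have a: "a > 0" unfolding a_def using pdT_diag[OF pd] fin by simp
  define r where "r = (\<Sum>l\<in>T. P k l * w l)"
  define w' where "w' = w(k := - r / a)"
  have w'T: "\<And>j. j \<in> T \<Longrightarrow> w' j = w j" using k by (auto simp: w'_def)
  have w'k: "w' k = - r / a" by (simp add: w'_def)
  have "0 < (\<Sum>j\<in>insert k T. \<Sum>l\<in>insert k T. w' j * P j l * w' l)"
  proof -
    obtain j where j: "j \<in> T" "w j \<noteq> 0" using w by blast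
    then have "\<exists>j\<in>insert k T. w' j \<noteq> 0" using w'T by auto
    then show ?thesis using pd unfolding pdT_def by blast
  qed
  also have "(\<Sum>j\<in>insert k T. \<Sum>l\<in>insert k T. w' j * P j l * w' l) = w' k * P k k * w' k + 2 * w' k * (\<Sum>l\<in>T. P k l * w' l) + (\<Sum>j\<in>T. \<Sum>l\<in>T. w' j * P j l * w' l)"
    by (rule qexp[where P=P, OF fin k symk])
  also have "(\<Sum>l\<in>T. P k l * w' l) = r" unfolding r_def using w'T by (intro sum.cong) auto
  also have "(\<Sum>j\<in>T. \<Sum>l\<in>T. w' j * P j l * w' l) = (\<Sum>j\<in>T. \<Sum>l\<in>T. w j * P j l * w l)"
    using w'T by (intro sum.cong) auto
  also have "w' k * P k k * w' k + 2 * w' k * r + (\<Sum>j\<in>T. \<Sum>l\<in>T. w j * P j l * w l)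
      = (\<Sum>j\<in>T. \<Sum>l\<in>T. w j * P j l * w l) - r^2 / a"
  proof -
    have "w' k * a * w' k + 2 * w' k * r = - (r^2) / a"
      unfolding w'k using a by (simp add: field_simps power2_eq_square)
    then show ?thesis by (simp add: a_def)
  qed
  also have "\<dots> = (\<Sum>j\<in>T. \<Sum>l\<in>T. w j * (P j l - P j k * P k l / P k k) * w l)"
    unfolding a_def r_def by (rule quad_schur[symmetric]) (rule symk)
  finally show "0 < (\<Sum>j\<in>T. \<Sum>l\<in>T. w j * (P j l - P j k * P k l / P k k) * w l)" .
qed

lemma gfun_pos: "0 < gfun T P c h y"
  by (simp add: gfun_def)

lemma gaussL:
  fixes T :: "'n::finite set" and P :: "'n \<Rightarrow> 'n \<Rightarrow> real"
  assumes "symT T P" "pdT T P"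
  shows "\<exists>e>0. ((\<forall>j\<in>T. h j = 0) \<longrightarrow> e = 1) \<and> 0 < det (emb T P) \<and>
    (\<integral>\<^sup>+y. ennreal (gfun T P c h y) \<partial>PiM T (\<lambda>_. lborel)) = ennreal (e * sqrt ((2*pi)^card T / det (emb T P)))"
proof -
  have "finite T" by simp
  from this assms show ?thesis
  proof (induction T arbitrary: P h rule: finite_induct)
    case empty
    have "(\<integral>\<^sup>+y. ennreal (gfun {} P c h y) \<partial>PiM {} (\<lambda>_. lborel)) = 1"
      by (simp add: PiM_empty gfun_def quadT_def linT_def nn_integral_count_space_finite)
    then show ?case by (intro exI[of _ 1]) (simp add: emb_empty)
  next
    case (insert k T)
    interpret product_sigma_finite "\<lambda>_. lborel :: real measure"
      by (simp add: product_sigma_finite_def sigma_finite_lborel)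
    define a where "a = P k k"
    have a: "a > 0" unfolding a_def using pdT_diag[OF insert.prems(2)] insert.hyps by simp
    define P' where "P' = (\<lambda>j l. P j l - P j k * P k l / P k k)"
    define h' where "h' = (\<lambda>j. h j - h k * P k j / P k k)"
    have symk: "\<And>j. j \<in> T \<Longrightarrow> P j k = P k j" using insert.prems(1) unfolding symT_def by blast
    have sym': "symT T P'"
      unfolding symT_def P'_def
    proof (intro ballI)
      fix j l assume jl: "j \<in> T" "l \<in> T"
      have e1: "P j l = P l j" using insert.prems(1) jl unfolding symT_def by blast
      have e2: "P j k = P k j" using symk jl by blast
      have e3: "P l k = P k l" using symk jl by blast
      show "P j l - P j k * P k l / P k k = P l j - P l k * P k j / P k k"
        unfolding e1 e2 e3 by (simp add: mult.commute)
    qed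
    have pd': "pdT T P'"
      unfolding P'_def by (rule schur_pd[OF insert.hyps insert.prems])
    obtain e' where e': "e' > 0" "(\<forall>j\<in>T. h' j = 0) \<longrightarrow> e' = 1" "0 < det (emb T P')"
      "(\<integral>\<^sup>+y. ennreal (gfun T P' c h' y) \<partial>PiM T (\<lambda>_. lborel)) = ennreal (e' * sqrt ((2*pi)^card T / det (emb T P')))"
      using insert.IH[OF sym' pd', of h'] by blast
    define K where "K = sqrt (2*pi/a) * exp ((h k)^2/(2*a))"
    have Kpos: "K > 0" unfolding K_def using a by simp
    have inner: "(\<integral>\<^sup>+t. ennreal (gfun (insert k T) P c h (x(k:=t))) \<partial>lborel) = ennreal (K * gfun T P' c h' x)" for x
    proof -
      define v where "v = (\<Sum>l\<in>T. P k l * (x l - c l))"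
      define A where "A = -(1/2) * quadT T P c x + linT T h c x"
      have g: "gfun (insert k T) P c h (x(k:=t)) = exp A * exp (-(1/2) * a * (t - c k)^2 + (h k - v) * (t - c k))" for t
      proof -
        have q: "quadT (insert k T) P c (x(k:=t)) = (t - c k) * a * (t - c k) + 2 * (t - c k) * v + quadT T P c x"
        proof -
          have "quadT (insert k T) P c (x(k:=t)) = ((x(k:=t)) k - c k) * P k k * ((x(k:=t)) k - c k)
             + 2 * ((x(k:=t)) k - c k) * (\<Sum>l\<in>T. P k l * ((x(k:=t)) l - c l))
             + (\<Sum>j\<in>T. \<Sum>l\<in>T. ((x(k:=t)) j - c j) * P j l * ((x(k:=t)) l - c l))"
            unfolding quadT_def by (rule qexp[where P=P, OF insert.hyps symk])
          also have "(\<Sum>l\<in>T. P k l * ((x(k:=t)) l - c l)) = v"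
            unfolding v_def using insert.hyps by (intro sum.cong) auto
          also have "(\<Sum>j\<in>T. \<Sum>l\<in>T. ((x(k:=t)) j - c j) * P j l * ((x(k:=t)) l - c l)) = quadT T P c x"
            unfolding quadT_def using insert.hyps by (intro sum.cong) auto
          finally show ?thesis unfolding a_def by (simp add: fun_upd_def)
        qed
        have l: "linT (insert k T) h c (x(k:=t)) = h k * (t - c k) + linT T h c x"
        proof -
          have "linT (insert k T) h c (x(k:=t)) = h k * (t - c k) + (\<Sum>j\<in>T. h j * ((x(k:=t)) j - c j))"
            unfolding linT_def using insert.hyps by simp
          also have "(\<Sum>j\<in>T. h j * ((x(k:=t)) j - c j)) = linT T h c x"
            unfolding linT_def using insert.hyps by (intro sum.cong) auto
          finally show ?thesis .
        qed
        have "-(1/2) * quadT (insert k T) P c (x(k:=t)) + linT (insert k T) h c (x(k:=t))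
            = A + (-(1/2) * a * (t - c k)^2 + (h k - v) * (t - c k))"
          unfolding q l A_def by (simp add: algebra_simps power2_eq_square)
        then show ?thesis unfolding gfun_def by (simp add: exp_add)
      qed
      have "(\<integral>\<^sup>+t. ennreal (gfun (insert k T) P c h (x(k:=t))) \<partial>lborel)
          = (\<integral>\<^sup>+t. ennreal (exp A) * ennreal (exp (-(1/2) * a * (t - c k)^2 + (h k - v) * (t - c k))) \<partial>lborel)"
        by (intro nn_integral_cong) (simp add: g ennreal_mult)
      also have "\<dots> = ennreal (exp A) * (\<integral>\<^sup>+t. ennreal (exp (-(1/2) * a * (t - c k)^2 + (h k - v) * (t - c k))) \<partial>lborel)"
        by (rule nn_integral_cmult) simp
      also have "\<dots> = ennreal (exp A) * ennreal (sqrt (2*pi/a) * exp ((h k - v)^2 / (2*a)))"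
        by (subst gauss1d[OF a]) (rule refl)
      also have "\<dots> = ennreal (exp A * (sqrt (2*pi/a) * exp ((h k - v)^2 / (2*a))))"
        by (rule ennreal_mult[symmetric]) (use a in auto)
      also have "exp A * (sqrt (2*pi/a) * exp ((h k - v)^2 / (2*a))) = K * gfun T P' c h' x"
      proof -
        have qs: "quadT T P' c x = quadT T P c x - v^2 / a"
          unfolding quadT_def P'_def v_def a_def by (rule quad_schur) (rule symk)
        have ls: "linT T h' c x = linT T h c x - h k * v / a"
          unfolding linT_def h'_def v_def a_def by (rule lin_schur)
        have "A + (h k - v)^2 / (2*a) = (h k)^2/(2*a) + (-(1/2) * quadT T P' c x + linT T h' c x)"
          unfolding qs ls A_def using a by (simp add: field_simps power2_eq_square)
        then have "exp A * exp ((h k - v)^2 / (2*a)) = exp ((h k)^2/(2*a)) * gfun T P' c h' x"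
          unfolding gfun_def by (simp add: exp_add[symmetric])
        then show ?thesis unfolding K_def by (simp add: algebra_simps)
      qed
      finally show ?thesis .
    qed
    have "(\<integral>\<^sup>+y. ennreal (gfun (insert k T) P c h y) \<partial>PiM (insert k T) (\<lambda>_. lborel))
        = (\<integral>\<^sup>+x. (\<integral>\<^sup>+t. ennreal (gfun (insert k T) P c h (x(k:=t))) \<partial>lborel) \<partial>PiM T (\<lambda>_. lborel))"
      by (rule product_nn_integral_insert[OF insert.hyps]) measurable
    also have "\<dots> = (\<integral>\<^sup>+x. ennreal K * ennreal (gfun T P' c h' x) \<partial>PiM T (\<lambda>_. lborel))"
      unfolding inner by (intro nn_integral_cong ennreal_mult) (use Kpos gfun_pos[THEN less_imp_le] in auto)
    also have "\<dots> = ennreal K * (\<integral>\<^sup>+x. ennreal (gfun T P' c h' x) \<partial>PiM T (\<lambda>_. lborel))"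
      by (rule nn_integral_cmult) measurable
    also have "\<dots> = ennreal (K * (e' * sqrt ((2*pi)^card T / det (emb T P'))))"
      unfolding e'(4) by (rule ennreal_mult[symmetric]) (use Kpos e' in auto)
    finally have I: "(\<integral>\<^sup>+y. ennreal (gfun (insert k T) P c h y) \<partial>PiM (insert k T) (\<lambda>_. lborel))
        = ennreal (K * (e' * sqrt ((2*pi)^card T / det (emb T P'))))" .
    have D: "det (emb (insert k T) P) = a * det (emb T P')"
    proof -
      have "det (emb (insert k T) P) = P k k * det (emb (insert k T - {k}) P')"
        unfolding P'_def by (rule det_schur) (use a a_def in auto)
      moreover have "insert k T - {k} = T" using insert.hyps by auto
      ultimately show ?thesis by (simp add: a_def)
    qed
    define e where "e = exp ((h k)^2/(2*a)) * e'"
    show ?case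
    proof (intro exI[of _ e] conjI impI)
      show "0 < e" unfolding e_def using e' by simp
      show "0 < det (emb (insert k T) P)" unfolding D using a e' by simp
      assume h0: "\<forall>j\<in>insert k T. h j = 0"
      then have "\<forall>j\<in>T. h' j = 0" unfolding h'_def by simp
      then have "e' = 1" using e' by simp
      then show "e = 1" unfolding e_def using h0 by simp
    next
      have "K * (e' * sqrt ((2*pi)^card T / det (emb T P'))) = e * sqrt ((2*pi)^card (insert k T) / det (emb (insert k T) P))"
      proof -
        have "sqrt (2*pi/a) * sqrt ((2*pi)^card T / det (emb T P')) = sqrt ((2*pi)^card (insert k T) / det (emb (insert k T) P))"
          unfolding D using insert.hyps a e' by (simp add: real_sqrt_mult[symmetric] field_simps)
        then show ?thesis unfolding K_def e_def by (simp add: algebra_simps)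
      qed
      then show "(\<integral>\<^sup>+y. ennreal (gfun (insert k T) P c h y) \<partial>PiM (insert k T) (\<lambda>_. lborel)) = ennreal (e * sqrt ((2*pi)^card (insert k T) / det (emb (insert k T) P)))"
        unfolding I by simp
    qed
  qed
qed

lemma gauss_integrable:
  fixes T :: "'n::finite set" and P :: "'n \<Rightarrow> 'n \<Rightarrow> real"
  assumes "symT T P" "pdT T P"
  shows "integrable (PiM T (\<lambda>_. lborel)) (gfun T P c h)"
proof (rule integrableI_bounded)
  show "gfun T P c h \<in> borel_measurable (PiM T (\<lambda>_. lborel))" by measurable
  obtain e where "(\<integral>\<^sup>+y. ennreal (gfun T P c h y) \<partial>PiM T (\<lambda>_. lborel)) = ennreal (e * sqrt ((2*pi)^card T / det (emb T P)))"
    using gaussL[OF assms, of h c] by blast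
  then show "(\<integral>\<^sup>+y. ennreal (norm (gfun T P c h y)) \<partial>PiM T (\<lambda>_. lborel)) < \<infinity>"
    using gfun_pos[of T P c h] by (simp add: abs_of_pos)
qed

lemma gauss_integral:
  fixes T :: "'n::finite set" and P :: "'n \<Rightarrow> 'n \<Rightarrow> real"
  assumes "symT T P" "pdT T P"
  shows "\<exists>e>0. ((\<forall>j\<in>T. h j = 0) \<longrightarrow> e = 1) \<and> 0 < det (emb T P) \<and>
    (\<integral>y. gfun T P c h y \<partial>PiM T (\<lambda>_. lborel)) = e * sqrt ((2*pi)^card T / det (emb T P))"
proof -
  obtain e where e: "e > 0" "(\<forall>j\<in>T. h j = 0) \<longrightarrow> e = 1" "0 < det (emb T P)"
    "(\<integral>\<^sup>+y. ennreal (gfun T P c h y) \<partial>PiM T (\<lambda>_. lborel)) = ennreal (e * sqrt ((2*pi)^card T / det (emb T P)))"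
    using gaussL[OF assms, of h c] by blast
  have "ennreal (\<integral>y. gfun T P c h y \<partial>PiM T (\<lambda>_. lborel)) = ennreal (e * sqrt ((2*pi)^card T / det (emb T P)))"
    unfolding e(4)[symmetric]
    by (rule nn_integral_eq_integral[symmetric]) (use gauss_integrable[OF assms] gfun_pos[THEN less_imp_le] in \<open>auto intro!: AE_I2\<close>)
  then have "(\<integral>y. gfun T P c h y \<partial>PiM T (\<lambda>_. lborel)) = e * sqrt ((2*pi)^card T / det (emb T P))"
    using e by (subst (asm) ennreal_inj) (auto intro!: integral_nonneg_AE gfun_pos[THEN less_imp_le])
  then show ?thesis using e by blast
qed

lemma quad_vec: "(x::real^'n::finite) \<bullet> (A *v x) = (\<Sum>j\<in>UNIV. \<Sum>l\<in>UNIV. x$j * A$j$l * x$l)"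
  by (simp add: inner_vec_def matrix_vector_mult_def sum_distrib_left mult.assoc)

lemma sum_UNIV_if: "(\<Sum>c\<in>(UNIV::'n::finite set). (if c \<in> S then f c else 0) * (g c::real)) = (\<Sum>c\<in>S. f c * g c)"
  by (rule sum.mono_neutral_cong_right) auto

lemma emb_UNIV: "emb UNIV (\<lambda>j l. A$j$l) = A"
  by (simp add: emb_def vec_eq_iff)

lemma sp_entry_sym: "sym_posdef \<Sigma> \<Longrightarrow> \<Sigma>$j$l = \<Sigma>$l$j"
  unfolding sym_posdef_def by (metis transpose_def vec_lambda_beta)

lemma sp_symT: "sym_posdef \<Sigma> \<Longrightarrow> symT S (\<lambda>j l. \<Sigma>$j$l)"
  unfolding symT_def using sp_entry_sym by blast

lemma pd_pdT:
  fixes A :: "real^'n::finite^'n"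
  assumes pd: "\<And>x. x \<noteq> 0 \<Longrightarrow> 0 < x \<bullet> (A *v x)"
  shows "pdT S (\<lambda>j l. A$j$l)"
  unfolding pdT_def
proof (intro allI impI)
  fix w :: "'n \<Rightarrow> real" assume w: "\<exists>j\<in>S. w j \<noteq> 0"
  define x :: "real^'n" where "x = (\<chi> j. if j \<in> S then w j else 0)"
  have "x \<noteq> 0" using w by (auto simp: x_def vec_eq_iff)
  then have "0 < x \<bullet> (A *v x)" by (rule pd)
  also have "x \<bullet> (A *v x) = (\<Sum>j\<in>UNIV. \<Sum>l\<in>UNIV. x$j * A$j$l * x$l)" by (rule quad_vec)
  also have "\<dots> = (\<Sum>j\<in>S. \<Sum>l\<in>UNIV. x$j * A$j$l * x$l)"
    by (rule sum.mono_neutral_right) (auto simp: x_def)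
  also have "\<dots> = (\<Sum>j\<in>S. \<Sum>l\<in>S. x$j * A$j$l * x$l)"
    by (intro sum.cong refl sum.mono_neutral_right) (auto simp: x_def)
  also have "\<dots> = (\<Sum>j\<in>S. \<Sum>l\<in>S. w j * A$j$l * w l)"
    by (simp add: x_def)
  finally show "0 < (\<Sum>j\<in>S. \<Sum>l\<in>S. w j * A$j$l * w l)" .
qed

lemma sp_pdT: "sym_posdef \<Sigma> \<Longrightarrow> pdT S (\<lambda>j l. \<Sigma>$j$l)"
  by (rule pd_pdT) (auto simp: sym_posdef_def)

lemma sp_det_emb_pos: assumes "sym_posdef \<Sigma>" shows "0 < det (emb S (\<lambda>j l. \<Sigma>$j$l))"
  using gauss_integral[OF sp_symT[OF assms] sp_pdT[OF assms]] by blast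

lemma sp_det_pos: "sym_posdef \<Sigma> \<Longrightarrow> 0 < det \<Sigma>"
  using sp_det_emb_pos[of \<Sigma> UNIV] by (simp add: emb_UNIV)

lemma inv_props:
  fixes A :: "real^'n::finite^'n"
  assumes "invertible A"
  shows "A ** matrix_inv A = mat 1" "matrix_inv A ** A = mat 1"
proof -
  have "\<exists>A'. A ** A' = mat 1 \<and> A' ** A = mat 1" using assms by (simp add: invertible_def)
  then have "A ** matrix_inv A = mat 1 \<and> matrix_inv A ** A = mat 1"
    unfolding matrix_inv_def by (rule someI_ex)
  then show "A ** matrix_inv A = mat 1" "matrix_inv A ** A = mat 1" by auto
qed

lemma sp_invertible: "sym_posdef \<Sigma> \<Longrightarrow> invertible \<Sigma>"
  using sp_det_pos invertible_det_nz by force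

lemma P_sym:
  assumes sp: "sym_posdef \<Sigma>"
  shows "transpose (matrix_inv \<Sigma>) = matrix_inv \<Sigma>"
proof -
  let ?P = "matrix_inv \<Sigma>"
  have i: "\<Sigma> ** ?P = mat 1" "?P ** \<Sigma> = mat 1" using inv_props[OF sp_invertible[OF sp]] by auto
  have tS: "transpose \<Sigma> = \<Sigma>" using sp by (simp add: sym_posdef_def)
  have "transpose ?P ** \<Sigma> = transpose (transpose \<Sigma> ** ?P)"
    by (simp add: matrix_transpose_mul)
  also have "\<dots> = mat 1" using i tS by (simp add: transpose_mat)
  finally have l: "transpose ?P ** \<Sigma> = mat 1" .
  have "transpose ?P = transpose ?P ** (\<Sigma> ** ?P)" using i by simp
  also have "\<dots> = (transpose ?P ** \<Sigma>) ** ?P" by (simp add: matrix_mul_assoc)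
  also have "\<dots> = ?P" using l by simp
  finally show ?thesis .
qed

lemma P_pd:
  assumes sp: "sym_posdef \<Sigma>" and x: "x \<noteq> 0"
  shows "0 < x \<bullet> (matrix_inv \<Sigma> *v x)"
proof -
  let ?P = "matrix_inv \<Sigma>"
  have i: "\<Sigma> ** ?P = mat 1" "?P ** \<Sigma> = mat 1" using inv_props[OF sp_invertible[OF sp]] by auto
  define v where "v = ?P *v x"
  have xv: "x = \<Sigma> *v v" unfolding v_def using i by (simp add: matrix_vector_mul_assoc)
  have "v \<noteq> 0" using x xv by auto
  then have "0 < v \<bullet> (\<Sigma> *v v)" using sp by (simp add: sym_posdef_def)
  also have "v \<bullet> (\<Sigma> *v v) = x \<bullet> (?P *v x)" using xv v_def by (simp add: inner_commute)
  finally show ?thesis .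
qed

lemma P_det:
  assumes sp: "sym_posdef \<Sigma>"
  shows "det (matrix_inv \<Sigma>) = 1 / det \<Sigma>"
proof -
  have "det \<Sigma> * det (matrix_inv \<Sigma>) = 1"
    using inv_props[OF sp_invertible[OF sp]] by (metis det_I det_mul)
  then show ?thesis using sp_det_pos[OF sp] by (simp add: field_simps)
qed

definition sispec :: "real^'n^'n \<Rightarrow> 'n::finite set \<Rightarrow> ('n \<Rightarrow> 'n \<Rightarrow> real) \<Rightarrow> bool" where
  "sispec \<Sigma> S C \<longleftrightarrow>
      (\<forall>j\<in>S. \<forall>l\<in>S. (\<Sum>k\<in>S. \<Sigma> $ j $ k * C k l) = (if j = l then 1 else 0)) \<and>
      (\<forall>j\<in>S. \<forall>l\<in>S. (\<Sum>k\<in>S. C j k * \<Sigma> $ k $ l) = (if j = l then 1 else 0)) \<and>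
      (\<forall>j l. j \<notin> S \<or> l \<notin> S \<longrightarrow> C j l = 0)"

lemma sispec_unique:
  assumes C: "sispec \<Sigma> S C" and D: "sispec \<Sigma> S D"
  shows "C = D"
proof (intro ext)
  fix j l
  show "C j l = D j l"
  proof (cases "j \<in> S \<and> l \<in> S")
    case False then show ?thesis using C D by (auto simp: sispec_def)
  next
    case True
    then have j: "j \<in> S" and l: "l \<in> S" by auto
    have "C j l = (\<Sum>k\<in>S. C j k * (if k = l then 1 else 0))"
      using l by (simp add: if_distrib[of "\<lambda>z. _ * z"] cong: if_cong)
    also have "\<dots> = (\<Sum>k\<in>S. C j k * (\<Sum>m\<in>S. \<Sigma>$k$m * D m l))"
      using D l by (intro sum.cong refl) (simp add: sispec_def)
    also have "\<dots> = (\<Sum>m\<in>S. (\<Sum>k\<in>S. C j k * \<Sigma>$k$m) * D m l)"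
      by (simp add: sum_distrib_left sum_distrib_right mult.assoc) (rule sum.swap)
    also have "\<dots> = (\<Sum>m\<in>S. (if j = m then 1 else 0) * D m l)"
      using C j by (intro sum.cong refl) (simp add: sispec_def)
    also have "\<dots> = D j l" using j by (simp add: if_distrib[of "\<lambda>z. z * _"] cong: if_cong)
    finally show ?thesis .
  qed
qed

lemma sispec_exists:
  assumes sp: "sym_posdef \<Sigma>"
  shows "\<exists>C. sispec \<Sigma> S C"
proof -
  define E where "E = emb S (\<lambda>j l. \<Sigma>$j$l)"
  have inv: "invertible E" unfolding E_def using sp_det_emb_pos[OF sp, of S] invertible_det_nz by force
  define N where "N = matrix_inv E"
  have i: "E ** N = mat 1" "N ** E = mat 1" using inv_props[OF inv] by (auto simp: N_def)
  define C where "C = (\<lambda>j l. if j \<in> S \<and> l \<in> S then N$j$l else 0)"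
  have Ejk: "E$j$k = (if j \<in> S \<and> k \<in> S then \<Sigma>$j$k else if j = k then 1 else 0)" for j k
    by (simp add: E_def emb_def)
  have "sispec \<Sigma> S C"
    unfolding sispec_def
  proof (intro conjI ballI allI impI)
    fix j l assume j: "j \<in> S" and l: "l \<in> S"
    have "(\<Sum>k\<in>S. \<Sigma> $ j $ k * C k l) = (\<Sum>k\<in>UNIV. E$j$k * N$k$l)"
      using j l by (intro sum.mono_neutral_cong_left) (auto simp: Ejk C_def)
    also have "\<dots> = (E ** N)$j$l" by (simp add: matrix_matrix_mult_def)
    finally show "(\<Sum>k\<in>S. \<Sigma> $ j $ k * C k l) = (if j = l then 1 else 0)"
      using i by (simp add: mat_def)
  next
    fix j l assume j: "j \<in> S" and l: "l \<in> S"
    have "(\<Sum>k\<in>S. C j k * \<Sigma> $ k $ l) = (\<Sum>k\<in>UNIV. N$j$k * E$k$l)"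
      using j l by (intro sum.mono_neutral_cong_left) (auto simp: Ejk C_def)
    also have "\<dots> = (N ** E)$j$l" by (simp add: matrix_matrix_mult_def)
    finally show "(\<Sum>k\<in>S. C j k * \<Sigma> $ k $ l) = (if j = l then 1 else 0)"
      using i by (simp add: mat_def)
  next
    fix j l assume "j \<notin> S \<or> l \<notin> S"
    then show "C j l = 0" by (auto simp: C_def)
  qed
  then show ?thesis by blast
qed

lemma sub_inv_spec:
  assumes sp: "sym_posdef \<Sigma>"
  shows "sispec \<Sigma> S (sub_inv \<Sigma> S)"
proof -
  obtain C where C: "sispec \<Sigma> S C" using sispec_exists[OF sp] by blast
  have "sub_inv \<Sigma> S = C"
    unfolding sub_inv_def sispec_def[symmetric]
    using C sispec_unique by blast
  then show ?thesis using C by simp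
qed

lemma A_hat_mult:
  assumes sp: "sym_posdef \<Sigma>"
  shows "A_hat \<Sigma> S *v u = \<Sigma> *v (\<chi> k. if k \<in> S then (\<Sum>c\<in>S. sub_inv \<Sigma> S k c * u$c) else 0)"
proof -
  have "(A_hat \<Sigma> S *v u)$r = (\<Sigma> *v (\<chi> k. if k \<in> S then (\<Sum>c\<in>S. sub_inv \<Sigma> S k c * u$c) else 0))$r" for r
  proof -
    have "(A_hat \<Sigma> S *v u)$r = (\<Sum>c\<in>S. \<Sum>k\<in>S. \<Sigma>$r$k * sub_inv \<Sigma> S k c * u$c)"
      by (simp add: A_hat_def matrix_vector_mult_def sum_UNIV_if sum_distrib_right)
    also have "\<dots> = (\<Sum>k\<in>S. \<Sigma>$r$k * (\<Sum>c\<in>S. sub_inv \<Sigma> S k c * u$c))"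
      by (subst sum.swap) (simp add: sum_distrib_left mult.assoc)
    also have "\<dots> = (\<Sigma> *v (\<chi> k. if k \<in> S then (\<Sum>c\<in>S. sub_inv \<Sigma> S k c * u$c) else 0))$r"
      by (simp add: matrix_vector_mult_def if_distrib[of "\<lambda>z. _ * z"] sum.If_cases cong: if_cong)
    finally show ?thesis .
  qed
  then show ?thesis by (simp add: vec_eq_iff)
qed

lemma A_hat_on_S:
  assumes sp: "sym_posdef \<Sigma>" and r: "r \<in> S"
  shows "(A_hat \<Sigma> S *v u)$r = u$r"
proof -
  have "(A_hat \<Sigma> S *v u)$r = (\<Sum>c\<in>S. \<Sum>k\<in>S. \<Sigma>$r$k * sub_inv \<Sigma> S k c * u$c)"
    by (simp add: A_hat_def matrix_vector_mult_def sum_UNIV_if sum_distrib_right)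
  also have "\<dots> = (\<Sum>c\<in>S. (\<Sum>k\<in>S. \<Sigma>$r$k * sub_inv \<Sigma> S k c) * u$c)"
    by (simp add: sum_distrib_right)
  also have "\<dots> = (\<Sum>c\<in>S. (if r = c then 1 else 0) * u$c)"
    using sub_inv_spec[OF sp, of S] r by (intro sum.cong refl) (simp add: sispec_def)
  also have "\<dots> = u$r" using r by (simp add: if_distrib[of "\<lambda>z. z * _"] cong: if_cong)
  finally show ?thesis .
qed

lemma inner_sym_mat:
  fixes A :: "real^'n::finite^'n"
  assumes "transpose A = A"
  shows "x \<bullet> (A *v y) = (A *v x) \<bullet> y"
  by (metis assms dot_lmul_matrix transpose_matrix_vector)

lemma axis_sum_comp:
  fixes T :: "'n::finite set"
  shows "(\<Sum>j\<in>T. f j *\<^sub>R axis j (1::real))$i = (if i \<in> T then f i else 0)"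
  by (simp add: axis_def if_distrib[of "\<lambda>z. _ * z"] cong: if_cong)

lemma abs_le_exp: "\<bar>s::real\<bar> \<le> exp s + exp (-s)"
  using exp_ge_add_one_self[of s] exp_ge_add_one_self[of "-s"] exp_gt_zero[of s] exp_gt_zero[of "-s"]
  by (intro abs_leI) linarith+

lemma gfun_h: "gfun T P c h y = gfun T P c (\<lambda>_. 0) y * exp (linT T h c y)"
  by (simp add: gfun_def linT_def exp_add[symmetric])

lemma linT_delta:
  assumes "j \<in> T" "finite T"
  shows "linT T (\<lambda>i. if i = j then s else 0) c y = s * (y j - c j)"
  using assms by (simp add: linT_def if_distrib[of "\<lambda>z. z * _"] cong: if_cong)

lemma gfun_moment_integrable:
  fixes T :: "'n::finite set" and P :: "'n \<Rightarrow> 'n \<Rightarrow> real"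
  assumes sym: "symT T P" and pd: "pdT T P" and j: "j \<in> T"
  shows "integrable (PiM T (\<lambda>_. lborel)) (\<lambda>y. gfun T P c (\<lambda>_. 0) y * (y j - c j))"
proof -
  let ?hp = "\<lambda>i. if i = j then (1::real) else 0"
  let ?hm = "\<lambda>i. if i = j then (-1::real) else 0"
  show ?thesis
  proof (rule Bochner_Integration.integrable_bound[where f="\<lambda>y. gfun T P c ?hp y + gfun T P c ?hm y"])
  show "integrable (PiM T (\<lambda>_. lborel)) (\<lambda>y. gfun T P c ?hp y + gfun T P c ?hm y)"
    using gauss_integrable[OF sym pd] by auto
  show "(\<lambda>y. gfun T P c (\<lambda>_. 0) y * (y j - c j)) \<in> borel_measurable (PiM T (\<lambda>_. lborel))"
    using j by measurable
  show "AE y in PiM T (\<lambda>_. lborel). norm (gfun T P c (\<lambda>_. 0) y * (y j - c j)) \<le> norm (gfun T P c ?hp y + gfun T P c ?hm y)"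
  proof (intro AE_I2)
    fix y :: "'n \<Rightarrow> real"
    have ep: "gfun T P c ?hp y = gfun T P c (\<lambda>_. 0) y * exp (y j - c j)"
      by (subst gfun_h) (simp add: linT_delta[OF j])
    have em: "gfun T P c ?hm y = gfun T P c (\<lambda>_. 0) y * exp (- (y j - c j))"
      by (subst gfun_h) (simp add: linT_delta[OF j])
    have g0: "0 < gfun T P c (\<lambda>_. 0) y" by (rule gfun_pos)
    have "norm (gfun T P c (\<lambda>_. 0) y * (y j - c j)) = gfun T P c (\<lambda>_. 0) y * \<bar>y j - c j\<bar>"
      using g0 by (simp add: abs_mult)
    also have "\<dots> \<le> gfun T P c (\<lambda>_. 0) y * (exp (y j - c j) + exp (- (y j - c j)))"
      using g0 abs_le_exp[of "y j - c j"] by (intro mult_left_mono) auto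
    also have "\<dots> = norm (gfun T P c ?hp y + gfun T P c ?hm y)"
      unfolding ep em using g0 by (simp add: algebra_simps)
    finally show "norm (gfun T P c (\<lambda>_. 0) y * (y j - c j)) \<le> norm (gfun T P c ?hp y + gfun T P c ?hm y)" .
  qed
  qed
qed

lemma gfun_moment_zero:
  fixes T :: "'n::finite set" and P :: "'n \<Rightarrow> 'n \<Rightarrow> real"
  assumes j: "j \<in> T"
  shows "(\<integral>y. gfun T P c (\<lambda>_. 0) y * (y j - c j) \<partial>PiM T (\<lambda>_. lborel)) = 0"
proof -
  let ?f = "\<lambda>y. gfun T P c (\<lambda>_. 0) y * (y j - c j)"
  let ?R = "\<lambda>y. \<lambda>i\<in>T. 2 * c i - y i"
  have R: "?R \<in> measurable (PiM T (\<lambda>_. lborel)) (PiM T (\<lambda>_. lborel))" by measurable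
  have f: "?f \<in> borel_measurable (PiM T (\<lambda>_. lborel))" using j by measurable
  have fR: "?f (?R y) = - ?f y" for y
  proof -
    have "quadT T P c (?R y) = quadT T P c y"
      unfolding quadT_def by (intro sum.cong refl) (simp add: algebra_simps)
    then show ?thesis using j by (simp add: gfun_def linT_def algebra_simps)
  qed
  have "(\<integral>y. ?f y \<partial>PiM T (\<lambda>_. lborel)) = (\<integral>y. ?f y \<partial>distr (PiM T (\<lambda>_. lborel)) (PiM T (\<lambda>_. lborel)) ?R)"
    by (simp add: PiM_reflect)
  also have "\<dots> = (\<integral>y. ?f (?R y) \<partial>PiM T (\<lambda>_. lborel))"
    by (rule integral_distr[OF R f])
  also have "\<dots> = - (\<integral>y. ?f y \<partial>PiM T (\<lambda>_. lborel))"
    unfolding fR by simp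
  finally show ?thesis by simp
qed

lemma cond_main:
  fixes \<Sigma> :: "real^'n::finite^'n" and \<mu> x :: "real^'n" and S :: "'n set"
    and B0 :: "real^'m::finite" and B :: "real^'m^'n"
  assumes sp: "sym_posdef \<Sigma>"
  shows "(\<integral>y. gauss_density \<Sigma> \<mu> (glue S x y) *\<^sub>R (B0 + transpose B *v glue S x y) \<partial>PiM (-S) (\<lambda>_. lborel))
          = (\<integral>y. gauss_density \<Sigma> \<mu> (glue S x y) \<partial>PiM (-S) (\<lambda>_. lborel)) *\<^sub>R (B0 + transpose B *v (\<mu> + A_hat \<Sigma> S *v (x - \<mu>)))"
    and "0 < (\<integral>y. gauss_density \<Sigma> \<mu> (glue S x y) \<partial>PiM (-S) (\<lambda>_. lborel))"
    and "S = {} \<Longrightarrow> (\<integral>y. gauss_density \<Sigma> \<mu> (glue S x y) \<partial>PiM (-S) (\<lambda>_. lborel)) = 1"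
proof -
  define T where "T = -S"
  define P where "P = matrix_inv \<Sigma>"
  define Pf where "Pf = (\<lambda>j l. P$j$l)"
  define m where "m = \<mu> + A_hat \<Sigma> S *v (x - \<mu>)"
  define mf where "mf = (\<lambda>j. m$j)"
  define d where "d = m - \<mu>"
  define K where "K = d \<bullet> (P *v d)"
  define Z where "Z = sqrt ((2*pi)^CARD('n) * det \<Sigma>)"
  define CD where "CD = exp (-(1/2) * K) / Z"
  define G where "G = gfun T Pf mf (\<lambda>_. 0)"
  define g where "g = (\<lambda>z. B0 + transpose B *v z)"
  have i: "\<Sigma> ** P = mat 1" "P ** \<Sigma> = mat 1" using inv_props[OF sp_invertible[OF sp]] by (auto simp: P_def)
  have Psym: "transpose P = P" using P_sym[OF sp] by (simp add: P_def)
  have Zpos: "Z > 0" using sp_det_pos[OF sp] by (simp add: Z_def)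
  have CDpos: "CD > 0" using Zpos by (simp add: CD_def)
  have mS: "m$j = x$j" if "j \<in> S" for j using A_hat_on_S[OF sp that] by (simp add: m_def)
  define v where "v = (\<chi> k. if k \<in> S then (\<Sum>c\<in>S. sub_inv \<Sigma> S k c * (x - \<mu>)$c) else 0)"
  have dv: "d = \<Sigma> *v v" using A_hat_mult[OF sp, of S "x - \<mu>"] by (simp add: d_def m_def v_def)
  have vS: "v$k = 0" if "k \<notin> S" for k using that by (simp add: v_def)
  have Pd: "P *v d = v" using i by (simp add: dv matrix_vector_mul_assoc)
  have symP: "symT T Pf" using Psym unfolding symT_def Pf_def by (metis transpose_def vec_lambda_beta)
  have pdP: "pdT T Pf" unfolding Pf_def by (rule pd_pdT) (use P_pd[OF sp] in \<open>simp add: P_def\<close>)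
  have Q: "(glue S x y - \<mu>) \<bullet> (P *v (glue S x y - \<mu>)) = K + quadT T Pf mf y" for y
  proof -
    define z where "z = glue S x y - m"
    have zS: "z$j = 0" if "j \<in> S" for j using that mS by (simp add: z_def glue_def)
    have zT: "z$j = y j - m$j" if "j \<notin> S" for j using that by (simp add: z_def glue_def)
    have w: "glue S x y - \<mu> = d + z" by (simp add: z_def d_def)
    have vz: "v \<bullet> z = 0" unfolding inner_vec_def
      by (rule sum.neutral) (metis vS zS inner_zero_left inner_zero_right)
    have "(d + z) \<bullet> (P *v (d + z)) = d \<bullet> (P *v d) + d \<bullet> (P *v z) + (z \<bullet> (P *v d) + z \<bullet> (P *v z))"
      by (simp add: matrix_vector_right_distrib inner_add_left inner_add_right)
    also have "d \<bullet> (P *v z) = (P *v d) \<bullet> z" by (rule inner_sym_mat[OF Psym])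
    also have "z \<bullet> (P *v z) = quadT T Pf mf y"
    proof -
      have "z \<bullet> (P *v z) = (\<Sum>j\<in>UNIV. \<Sum>l\<in>UNIV. z$j * P$j$l * z$l)" by (rule quad_vec)
      also have "\<dots> = (\<Sum>j\<in>T. \<Sum>l\<in>UNIV. z$j * P$j$l * z$l)"
        by (rule sum.mono_neutral_right) (auto simp: T_def zS)
      also have "\<dots> = (\<Sum>j\<in>T. \<Sum>l\<in>T. z$j * P$j$l * z$l)"
        by (intro sum.cong refl sum.mono_neutral_right) (auto simp: T_def zS)
      also have "\<dots> = quadT T Pf mf y" unfolding quadT_def
        by (intro sum.cong refl) (simp add: T_def zT Pf_def mf_def)
      finally show ?thesis .
    qed
    finally show ?thesis using vz by (simp add: w Pd K_def inner_commute)
  qed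
  have Dy: "gauss_density \<Sigma> \<mu> (glue S x y) = CD * G y" for y
  proof -
    have "gauss_density \<Sigma> \<mu> (glue S x y) = exp (-(1/2) * (K + quadT T Pf mf y)) / Z"
      by (simp add: gauss_density_def Q[symmetric] P_def Z_def)
    also have "exp (-(1/2) * (K + quadT T Pf mf y)) = exp (-(1/2) * K) * exp (-(1/2) * quadT T Pf mf y + 0)"
      by (simp add: exp_add[symmetric] algebra_simps)
    also have "\<dots> / Z = CD * G y"
      by (simp add: CD_def G_def gfun_def linT_def)
    finally show ?thesis .
  qed
  have glue_dec: "glue S x y = m + (\<Sum>j\<in>T. (y j - m$j) *\<^sub>R axis j 1)" for y
  proof -
    have c: "(\<Sum>j\<in>T. (y j - m$j) *\<^sub>R axis j (1::real))$i = (if i \<in> T then y i - m$i else 0)" for i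
      by (rule axis_sum_comp)
    show ?thesis unfolding vec_eq_iff
    proof
      fix i
      show "glue S x y $ i = (m + (\<Sum>j\<in>T. (y j - m$j) *\<^sub>R axis j 1)) $ i"
        unfolding vector_add_component c using mS by (auto simp: glue_def T_def)
    qed
  qed
  define bv where "bv j = transpose B *v axis j (1::real)" for j
  have gdec: "g (glue S x y) = g m + (\<Sum>j\<in>T. (y j - m$j) *\<^sub>R bv j)" for y
    unfolding glue_dec g_def bv_def
    by (simp add: matrix_vector_right_distrib linear_sum[OF matrix_vector_mul_linear] matrix_vector_mult_scaleR o_def)
  have intG: "integrable (PiM T (\<lambda>_. lborel)) G" unfolding G_def by (rule gauss_integrable[OF symP pdP])
  have intGj: "integrable (PiM T (\<lambda>_. lborel)) (\<lambda>y. G y * (y j - m$j))" if "j \<in> T" for j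
    using gfun_moment_integrable[OF symP pdP that, of mf] by (simp add: G_def mf_def)
  have zeroGj: "(\<integral>y. G y * (y j - m$j) \<partial>PiM T (\<lambda>_. lborel)) = 0" if "j \<in> T" for j
    using gfun_moment_zero[OF that, of Pf mf] by (simp add: G_def mf_def)
  obtain e where e: "e > 0" "(\<forall>j\<in>T. (0::real) = 0) \<longrightarrow> e = 1" "0 < det (emb T Pf)"
    "(\<integral>y. G y \<partial>PiM T (\<lambda>_. lborel)) = e * sqrt ((2*pi)^card T / det (emb T Pf))"
    using gauss_integral[OF symP pdP, of "\<lambda>_. 0" mf] unfolding G_def by blast
  have intpos: "(\<integral>y. G y \<partial>PiM T (\<lambda>_. lborel)) > 0" using e by simp
  have intD: "(\<integral>y. gauss_density \<Sigma> \<mu> (glue S x y) \<partial>PiM (-S) (\<lambda>_. lborel)) = CD * (\<integral>y. G y \<partial>PiM T (\<lambda>_. lborel))"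
    unfolding Dy T_def by simp
  show "0 < (\<integral>y. gauss_density \<Sigma> \<mu> (glue S x y) \<partial>PiM (-S) (\<lambda>_. lborel))"
    unfolding intD using CDpos intpos by simp
  have "(\<integral>y. gauss_density \<Sigma> \<mu> (glue S x y) *\<^sub>R g (glue S x y) \<partial>PiM T (\<lambda>_. lborel))
      = (\<integral>y. (CD * G y) *\<^sub>R g m + (\<Sum>j\<in>T. (CD * (G y * (y j - m$j))) *\<^sub>R bv j) \<partial>PiM T (\<lambda>_. lborel))"
    by (intro Bochner_Integration.integral_cong refl) (simp add: Dy gdec scaleR_sum_right algebra_simps)
  also have "\<dots> = (\<integral>y. (CD * G y) *\<^sub>R g m \<partial>PiM T (\<lambda>_. lborel)) + (\<integral>y. (\<Sum>j\<in>T. (CD * (G y * (y j - m$j))) *\<^sub>R bv j) \<partial>PiM T (\<lambda>_. lborel))"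
    by (rule Bochner_Integration.integral_add) (use intG intGj in auto)
  also have "(\<integral>y. (\<Sum>j\<in>T. (CD * (G y * (y j - m$j))) *\<^sub>R bv j) \<partial>PiM T (\<lambda>_. lborel))
      = (\<Sum>j\<in>T. (\<integral>y. (CD * (G y * (y j - m$j))) *\<^sub>R bv j \<partial>PiM T (\<lambda>_. lborel)))"
    by (rule Bochner_Integration.integral_sum) (use intGj in auto)
  also have "\<dots> = 0"
  proof (intro sum.neutral ballI)
    fix j assume j: "j \<in> T"
    have "(\<integral>y. (CD * (G y * (y j - m$j))) *\<^sub>R bv j \<partial>PiM T (\<lambda>_. lborel)) = (\<integral>y. CD * (G y * (y j - m$j)) \<partial>PiM T (\<lambda>_. lborel)) *\<^sub>R bv j"
      by (rule integral_scaleR_left) (use intGj[OF j] in simp)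
    also have "(\<integral>y. CD * (G y * (y j - m$j)) \<partial>PiM T (\<lambda>_. lborel)) = 0" using zeroGj[OF j] by simp
    finally show "(\<integral>y. (CD * (G y * (y j - m$j))) *\<^sub>R bv j \<partial>PiM T (\<lambda>_. lborel)) = 0" by simp
  qed
  also have "(\<integral>y. (CD * G y) *\<^sub>R g m \<partial>PiM T (\<lambda>_. lborel)) = (\<integral>y. CD * G y \<partial>PiM T (\<lambda>_. lborel)) *\<^sub>R g m"
    by (rule integral_scaleR_left) (use intG in simp)
  also have "(\<integral>y. CD * G y \<partial>PiM T (\<lambda>_. lborel)) = CD * (\<integral>y. G y \<partial>PiM T (\<lambda>_. lborel))"
    by simp
  finally show "(\<integral>y. gauss_density \<Sigma> \<mu> (glue S x y) *\<^sub>R (B0 + transpose B *v glue S x y) \<partial>PiM (-S) (\<lambda>_. lborel))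
          = (\<integral>y. gauss_density \<Sigma> \<mu> (glue S x y) \<partial>PiM (-S) (\<lambda>_. lborel)) *\<^sub>R (B0 + transpose B *v (\<mu> + A_hat \<Sigma> S *v (x - \<mu>)))"
    unfolding intD by (simp add: g_def m_def T_def)
  assume S0: "S = {}"
  have A0: "A_hat \<Sigma> S = 0" using S0 by (simp add: A_hat_def vec_eq_iff)
  have "m = \<mu>" using A0 by (simp add: m_def)
  then have K0: "K = 0" by (simp add: K_def d_def)
  have TU: "T = UNIV" using S0 by (simp add: T_def)
  have e1: "e = 1" using e(2) by simp
  have "emb T Pf = P" unfolding TU Pf_def by (rule emb_UNIV)
  then have "(\<integral>y. G y \<partial>PiM T (\<lambda>_. lborel)) = sqrt ((2*pi)^CARD('n) / (1 / det \<Sigma>))"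
    using e(4) e1 TU P_det[OF sp] by (simp add: P_def)
  also have "\<dots> = Z" by (simp add: Z_def)
  finally show "(\<integral>y. gauss_density \<Sigma> \<mu> (glue S x y) \<partial>PiM (-S) (\<lambda>_. lborel)) = 1"
    unfolding intD using Zpos by (simp add: CD_def K0)
qed

lemma vec_lambda_measurable:
  "(\<lambda>f. vec_lambda f :: real^'n::finite) \<in> measurable (PiM UNIV (\<lambda>_. lborel)) borel"
proof (subst borel_measurable_euclidean_space, intro ballI)
  fix b :: "real^'n" assume "b \<in> Basis"
  then obtain i where b: "b = axis i 1" by (auto simp: Basis_vec_def)
  show "(\<lambda>f. vec_lambda f \<bullet> b) \<in> borel_measurable (PiM UNIV (\<lambda>_. lborel))"
    unfolding b cart_eq_inner_axis[symmetric] by simp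
qed

lemma gauss_density_cont: assumes sp: "sym_posdef \<Sigma>" shows "continuous_on UNIV (gauss_density \<Sigma> \<mu>)"
proof -
  have dp: "0 < det \<Sigma>" by (rule sp_det_pos[OF sp])
  have lin: "linear ((*v) (matrix_inv \<Sigma>))" by simp
  have "continuous_on UNIV (\<lambda>z. matrix_inv \<Sigma> *v (z - \<mu>))"
    by (intro linear_continuous_on_compose[OF _ lin] continuous_intros)
  then show ?thesis unfolding gauss_density_def[abs_def]
    using dp by (intro continuous_intros) auto
qed

lemma sum_matrix_vector: "(sum N F) *v (u::real^'n::finite) = (\<Sum>s\<in>F. N s *v u)"
  by (induction F rule: infinite_finite_induct) (simp_all add: matrix_vector_mult_add_rdistrib)

lemma scaleR_matrix_vector: "(c *\<^sub>R N) *v (u::real^'n::finite) = c *\<^sub>R (N *v u)"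
  by (simp add: vec_eq_iff matrix_vector_mult_def sum_distrib_left mult.assoc)

lemma gauss_expect_affine:
  fixes \<Sigma> :: "real^'n::finite^'n" and \<mu> :: "real^'n" and B0 :: "real^'m::finite" and B :: "real^'m^'n"
  assumes sp: "sym_posdef \<Sigma>"
  shows "gauss_expect \<Sigma> \<mu> (\<lambda>z. B0 + transpose B *v z) = B0 + transpose B *v \<mu>"
proof -
  let ?f = "\<lambda>z. gauss_density \<Sigma> \<mu> z *\<^sub>R (B0 + transpose B *v z)"
  have fm: "?f \<in> borel_measurable borel"
  proof (rule borel_measurable_continuous_onI)
    have "continuous_on UNIV (\<lambda>z. B0 + transpose B *v z)"
      by (intro continuous_intros linear_continuous_on matrix_vector_mul_bounded_linear)
    then show "continuous_on UNIV ?f"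
      using gauss_density_cont[OF sp] by (intro continuous_intros) auto
  qed
  have "gauss_expect \<Sigma> \<mu> (\<lambda>z. B0 + transpose B *v z) = (\<integral>z. ?f z \<partial>distr (PiM UNIV (\<lambda>_. lborel)) borel (\<lambda>f. vec_lambda f))"
    unfolding gauss_expect_def by (simp add: lborel_vec[symmetric])
  also have "\<dots> = (\<integral>y. ?f (vec_lambda y) \<partial>PiM UNIV (\<lambda>_. lborel))"
    by (rule integral_distr[OF vec_lambda_measurable fm])
  also have "\<dots> = (\<integral>y. gauss_density \<Sigma> \<mu> (glue {} 0 y) *\<^sub>R (B0 + transpose B *v glue {} 0 y) \<partial>PiM (-{}) (\<lambda>_. lborel))"
    by (simp add: glue_def)
  also have "\<dots> = B0 + transpose B *v \<mu>"
  proof -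
    have A0: "A_hat \<Sigma> {} = 0" by (simp add: A_hat_def vec_eq_iff)
    have c1: "(\<integral>y. gauss_density \<Sigma> \<mu> (glue {} 0 y) *\<^sub>R (B0 + transpose B *v glue {} 0 y) \<partial>PiM (-{}) (\<lambda>_. lborel))
       = (\<integral>y. gauss_density \<Sigma> \<mu> (glue {} 0 y) \<partial>PiM (-{}) (\<lambda>_. lborel)) *\<^sub>R (B0 + transpose B *v (\<mu> + A_hat \<Sigma> {} *v (0 - \<mu>)))"
      by (rule cond_main(1)[OF sp])
    have c3: "(\<integral>y. gauss_density \<Sigma> \<mu> (glue {} 0 y) \<partial>PiM (-{}) (\<lambda>_. lborel)) = 1"
      by (rule cond_main(3)[OF sp]) simp
    show ?thesis using c1 c3 by (simp add: A0)
  qed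
  finally show ?thesis .
qed

theorem mainTheorem10:
  fixes B0 :: "real^'m" and B :: "real^'m^'n" and \<mu> :: "real^'n" and \<Sigma> :: "real^'n^'n"
    and x :: "real^'n" and i :: 'n
  assumes "sym_posdef \<Sigma>"
  shows "shap \<Sigma> \<mu> (\<lambda>z. B0 + transpose B *v z) x i = transpose B *v (M_mat \<Sigma> i *v (x - \<mu>))"
proof -
  define g where "g = (\<lambda>z. B0 + transpose B *v z)"
  define u where "u = x - \<mu>"
  have E: "gauss_expect \<Sigma> \<mu> g = B0 + transpose B *v \<mu>"
    unfolding g_def by (rule gauss_expect_affine[OF assms])
  have CE: "gauss_cond_expect \<Sigma> \<mu> g S x = B0 + transpose B *v (\<mu> + A_hat \<Sigma> S *v u)" for S
  proof (cases "S = {}")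
    case True
    have A0: "A_hat \<Sigma> {} = 0" by (simp add: A_hat_def vec_eq_iff)
    show ?thesis using True E by (simp add: gauss_cond_expect_def A0)
  next
    case False
    have c1: "(\<integral>y. gauss_density \<Sigma> \<mu> (glue S x y) *\<^sub>R (B0 + transpose B *v glue S x y) \<partial>PiM (-S) (\<lambda>_. lborel))
       = (\<integral>y. gauss_density \<Sigma> \<mu> (glue S x y) \<partial>PiM (-S) (\<lambda>_. lborel)) *\<^sub>R (B0 + transpose B *v (\<mu> + A_hat \<Sigma> S *v (x - \<mu>)))"
      by (rule cond_main(1)[OF assms])
    have c2: "0 < (\<integral>y. gauss_density \<Sigma> \<mu> (glue S x y) \<partial>PiM (-S) (\<lambda>_. lborel))"
      by (rule cond_main(2)[OF assms])
    have "gauss_cond_expect \<Sigma> \<mu> g S x = (\<integral>y. gauss_density \<Sigma> \<mu> (glue S x y) *\<^sub>R g (glue S x y) \<partial>PiM (-S) (\<lambda>_. lborel))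
        /\<^sub>R (\<integral>y. gauss_density \<Sigma> \<mu> (glue S x y) \<partial>PiM (-S) (\<lambda>_. lborel))"
      using False by (simp add: gauss_cond_expect_def)
    also have "\<dots> = ((\<integral>y. gauss_density \<Sigma> \<mu> (glue S x y) \<partial>PiM (-S) (\<lambda>_. lborel)) *\<^sub>R (B0 + transpose B *v (\<mu> + A_hat \<Sigma> S *v (x - \<mu>))))
        /\<^sub>R (\<integral>y. gauss_density \<Sigma> \<mu> (glue S x y) \<partial>PiM (-S) (\<lambda>_. lborel))"
      unfolding g_def c1 ..
    also have "\<dots> = B0 + transpose B *v (\<mu> + A_hat \<Sigma> S *v (x - \<mu>))"
      using c2 by simp
    finally show ?thesis unfolding u_def .
  qed
  have V: "shap_v \<Sigma> \<mu> g x S = transpose B *v (A_hat \<Sigma> S *v u)" for S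
    unfolding shap_v_def CE E by (simp add: matrix_vector_right_distrib)
  have "shap \<Sigma> \<mu> g x i = (\<Sum>S\<in>{S. S \<subseteq> UNIV - {i}}.
        (fact (card S) * fact (CARD('n) - card S - 1) / fact CARD('n)) *\<^sub>R
        (transpose B *v ((A_hat \<Sigma> (S \<union> {i}) - A_hat \<Sigma> S) *v u)))"
    unfolding shap_def V
    by (intro sum.cong refl) (simp add: matrix_vector_mult_diff_rdistrib matrix_vector_mult_diff_distrib)
  also have "\<dots> = transpose B *v (M_mat \<Sigma> i *v u)"
    unfolding M_mat_def sum_matrix_vector scaleR_matrix_vector linear_sum[OF matrix_vector_mul_linear]
    by (simp add: matrix_vector_mult_scaleR o_def)
  finally show ?thesis unfolding g_def u_def .
qed

end
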